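(* Let $k$ be a positive integer. Then there exists $N$ (depending on $k$) such that for every integer $n>\max(k,N)$ with $\gcd(k,n)=1$ and every $m\in\{0,1,\ldots,n-1\}$ with $\gcd(m,n)=1$, the inequality $S(m,n)\ge S(k,n)$ holds only if $m$ can be written in the form $$m=\frac{nc+q}{d}$$ with integers $d\in\{1,\ldots,k\}$, $c\in\{0,1,\ldots,d-1\}$ with $\gcd(c,d)=1$, and $q\in\{1,\ldots,\lfloor k/d\rfloor\}$.
   Context: For integers $m,n$ with $n\neq 0$ and $\gcd(m,n)=1$, the Dedekind sum is $s(m,n)=\sum_{j=1}^{|n|}((j/n))((mj/n))$, where $((t))=t-\lfloor t\rfloor-1/2$ if $t\in\mathbb{R}\setminus\mathbb{Z}$ and $((t))=0$ if $t\in\mathbb{Z}$. Define $S(m,n)=12\,s(m,n)$. *)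

theory Defs
  imports Complex_Main
begin

definition sawtooth :: "real \<Rightarrow> real" where
  "sawtooth t = (if t \<in> \<int> then 0 else t - of_int \<lfloor>t\<rfloor> - 1/2)"

definition dedekind_sum :: "int \<Rightarrow> int \<Rightarrow> real" where
  "dedekind_sum m n = (\<Sum>j\<in>{1..\<bar>n\<bar>}. sawtooth (of_int j / of_int n) * sawtooth (of_int (m * j) / of_int n))"

definition S :: "int \<Rightarrow> int \<Rightarrow> real" where
  "S m n = 12 * dedekind_sum m n"

end

theory Submission
  imports Defs
begin



lemma saw_shift: "sawtooth (x + of_int t) = sawtooth x"
proof -
  have "(x + of_int t \<in> \<int>) = (x \<in> \<int>)"
    by (metis Ints_add Ints_diff Ints_of_int add_diff_cancel_right')
  then show ?thesis unfolding sawtooth_def by simp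
qed

lemma saw_abs: "\<bar>sawtooth x\<bar> \<le> 1/2"
proof -
  have "x - 1 < of_int \<lfloor>x\<rfloor>" "of_int \<lfloor>x\<rfloor> \<le> x" by linarith+
  then have "\<bar>x - of_int \<lfloor>x\<rfloor> - 1/2\<bar> \<le> 1/2" unfolding abs_le_iff by linarith
  then show ?thesis unfolding sawtooth_def by auto
qed

lemma ded_periodic:
  assumes "n > 0"
  shows "dedekind_sum (m + n*t) n = dedekind_sum m n"
  unfolding dedekind_sum_def
proof (rule sum.cong[OF refl])
  fix j assume "j \<in> {1..\<bar>n\<bar>}"
  have eq: "of_int ((m + n*t) * j) / of_int n = of_int (m*j) / (of_int n::real) + of_int (t*j)"
    using assms by (simp add: field_simps)
  then show "sawtooth (of_int j / of_int n) * sawtooth (of_int ((m + n * t) * j) / of_int n) =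
         sawtooth (of_int j / of_int n) * sawtooth (of_int (m * j) / of_int n)"
    by (simp only: eq saw_shift)
qed

lemma ded_mod:
  assumes "n > 0"
  shows "dedekind_sum m n = dedekind_sum (m mod n) n"
proof -
  have "m mod n + n * (m div n) = m" by (simp add: mult.commute)
  then show ?thesis using ded_periodic[OF assms, of "m mod n" "m div n"] by simp
qed

lemma S_mod: "n > 0 \<Longrightarrow> S m n = S (m mod n) n"
  unfolding S_def using ded_mod[of n m] by (simp del: ded_mod)

lemma prod_quarter: "\<bar>sawtooth x * sawtooth y\<bar> \<le> 1/4"
proof -
  have "\<bar>sawtooth x\<bar> * \<bar>sawtooth y\<bar> \<le> (1/2) * (1/2)"
    by (rule mult_mono, rule saw_abs, rule saw_abs, simp, simp)
  then show ?thesis by (simp add: abs_mult)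
qed

lemma S_bound:
  assumes "n > 0"
  shows "\<bar>S m n\<bar> \<le> 3 * n"
proof -
  have "\<bar>dedekind_sum m n\<bar> \<le> (\<Sum>j\<in>{1..\<bar>n\<bar>}. \<bar>sawtooth (of_int j / of_int n) * sawtooth (of_int (m * j) / of_int n)\<bar>)"
    unfolding dedekind_sum_def by (rule sum_abs)
  also have "\<dots> \<le> (\<Sum>j\<in>{1..\<bar>n\<bar>}. 1/4)"
    by (rule sum_mono) (rule prod_quarter)
  also have "\<dots> = of_int n / 4" using assms by simp
  finally show ?thesis unfolding S_def by simp
qed



lemma sum_id_int: "k \<ge> 0 \<Longrightarrow> 2 * (\<Sum>j\<in>{1..k}. j) = k * (k + 1::int)"
proof (induct k rule: int_ge_induct)
  case base then show ?case by simp
next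
  case (step i)
  have "{1..i+1} = insert (i+1) {1..i}" using step by (auto)
  then show ?case using step by (simp add: algebra_simps)
qed

lemma sum_sq_int: "k \<ge> 0 \<Longrightarrow> 6 * (\<Sum>j\<in>{1..k}. j^2) = k * (k + 1) * (2*k+1::int)"
proof (induct k rule: int_ge_induct)
  case base then show ?case by simp
next
  case (step i)
  have "{1..i+1} = insert (i+1) {1..i}" using step by (auto)
  then show ?case using step by (simp add: algebra_simps power2_eq_square)
qed

lemma mod_perm:
  fixes h k :: int
  assumes "k \<ge> 1" "coprime h k"
  shows "bij_betw (\<lambda>j. h*j mod k) {1..k-1} {1..k-1}"
proof -
  have ndvd: "\<not> k dvd h * j" if "j \<in> {1..k-1}" for j
  proof
    assume "k dvd h*j"
    then have "k dvd j" using assms(2) by (simp add: coprime_commute coprime_dvd_mult_right_iff)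
    then show False using that by (auto dest: zdvd_imp_le)
  qed
  have inj: "inj_on (\<lambda>j. h*j mod k) {1..k-1}"
  proof (rule inj_onI)
    fix x y assume xy: "x \<in> {1..k-1}" "y \<in> {1..k-1}" "h*x mod k = h*y mod k"
    then have "k dvd h*(x - y)" by (metis mod_eq_dvd_iff right_diff_distrib)
    then have "k dvd (x - y)" using assms(2) by (simp add: coprime_commute coprime_dvd_mult_right_iff)
    moreover have "\<bar>x - y\<bar> < k" using xy by auto
    ultimately have "x - y = 0"
    proof -
      assume "k dvd (x - y)" "\<bar>x - y\<bar> < k"
      then obtain c where c: "x - y = k*c" by (auto elim: dvdE)
      then have "k * \<bar>c\<bar> < k * 1" using \<open>\<bar>x - y\<bar> < k\<close> assms(1) by (simp add: abs_mult)
      then have "\<bar>c\<bar> < 1" using assms(1) by (simp add: mult_less_cancel_left)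
      then show "x - y = 0" using c by simp
    qed
    then show "x = y" by simp
  qed
  have sub: "(\<lambda>j. h*j mod k) ` {1..k-1} \<subseteq> {1..k-1}"
  proof
    fix y assume "y \<in> (\<lambda>j. h*j mod k) ` {1..k-1}"
    then obtain j where j: "j \<in> {1..k-1}" "y = h*j mod k" by auto
    have "y \<noteq> 0" using ndvd[OF j(1)] j(2) by (simp add: dvd_eq_mod_eq_0)
    moreover have "0 \<le> y" "y < k" using j assms by auto
    ultimately show "y \<in> {1..k-1}" by auto
  qed
  have "(\<lambda>j. h*j mod k) ` {1..k-1} = {1..k-1}"
    by (rule endo_inj_surj[OF _ sub inj]) simp
  then show ?thesis using inj by (simp add: bij_betw_def)
qed

lemma floor_set:
  fixes a c M :: int
  assumes "c > 0" "\<forall>x\<in>{1..M}. c*x \<noteq> a" "a div c \<le> M"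
  shows "{x\<in>{1..M}. c*x < a} = {1..a div c}"
proof (intro set_eqI iffI)
  fix x assume "x \<in> {x\<in>{1..M}. c*x < a}"
  then have "x \<ge> 1" "c*x \<le> a" by auto
  then have "(c*x) div c \<le> a div c" using assms(1) by (intro zdiv_mono1) auto
  moreover have "(c*x) div c = x" using assms(1) by simp
  ultimately show "x \<in> {1..a div c}" using \<open>x \<ge> 1\<close> by simp
next
  fix x assume x: "x \<in> {1..a div c}"
  then have "c * x \<le> c * (a div c)" using assms(1) by simp
  also have "\<dots> \<le> a" 
  proof -
    have "a = c*(a div c) + a mod c" by simp
    moreover have "a mod c \<ge> 0" using assms(1) by simp
    ultimately show ?thesis by linarith
  qed
  finally have "c*x \<le> a" .
  moreover have "x \<in> {1..M}" using x assms(3) by auto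
  ultimately show "x \<in> {x\<in>{1..M}. c*x < a}" using assms(2) by force
qed

lemma ndvd_aux:
  fixes h k j :: int
  assumes "coprime h k" "j \<in> {1..k-1}"
  shows "\<not> k dvd h * j"
proof
  assume "k dvd h*j"
  then have "k dvd j" using assms(1) by (simp add: coprime_commute coprime_dvd_mult_right_iff)
  then show False using assms(2) by (auto dest: zdvd_imp_le)
qed

lemma perm_sums:
  fixes h k :: int
  assumes "k \<ge> 1" "coprime h k"
  shows "(\<Sum>j\<in>{1..k-1}. h*j mod k) = (\<Sum>j\<in>{1..k-1}. j)"
    "(\<Sum>j\<in>{1..k-1}. (h*j mod k)^2) = (\<Sum>j\<in>{1..k-1}. j^2)"
  using sum.reindex_bij_betw[OF mod_perm[OF assms], of "\<lambda>x. x"]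
    sum.reindex_bij_betw[OF mod_perm[OF assms], of "\<lambda>x. x^2"] by auto

lemma F1:
  fixes h k :: int
  assumes "k \<ge> 1" "coprime h k"
  shows "h^2 * (\<Sum>j\<in>{1..k-1}. j^2) - 2*h*k*(\<Sum>j\<in>{1..k-1}. j*(h*j div k))
        + k^2 * (\<Sum>j\<in>{1..k-1}. (h*j div k)^2) = (\<Sum>j\<in>{1..k-1}. j^2)"
proof -
  have "(\<Sum>j\<in>{1..k-1}. j^2) = (\<Sum>j\<in>{1..k-1}. (h*j mod k)^2)" using perm_sums[OF assms] by simp
  also have "\<dots> = (\<Sum>j\<in>{1..k-1}. (h*j - k*(h*j div k))^2)"
    by (rule sum.cong) (auto simp: minus_div_mult_eq_mod[symmetric] mult.commute)
  also have "\<dots> = (\<Sum>j\<in>{1..k-1}. h^2*j^2 - 2*h*k*(j*(h*j div k)) + k^2*(h*j div k)^2)"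
    by (rule sum.cong) (simp_all add: power2_eq_square algebra_simps)
  also have "\<dots> = h^2 * (\<Sum>j\<in>{1..k-1}. j^2) - 2*h*k*(\<Sum>j\<in>{1..k-1}. j*(h*j div k))
        + k^2 * (\<Sum>j\<in>{1..k-1}. (h*j div k)^2)"
    by (simp add: sum.distrib sum_subtractf sum_distrib_left)
  finally show ?thesis by simp
qed

lemma F2:
  fixes h k :: int
  assumes "k \<ge> 1" "coprime h k"
  shows "h * (\<Sum>j\<in>{1..k-1}. j) - k*(\<Sum>j\<in>{1..k-1}. h*j div k) = (\<Sum>j\<in>{1..k-1}. j)"
proof -
  have "(\<Sum>j\<in>{1..k-1}. j) = (\<Sum>j\<in>{1..k-1}. h*j mod k)" using perm_sums[OF assms] by simp
  also have "\<dots> = (\<Sum>j\<in>{1..k-1}. h*j - k*(h*j div k))"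
    by (rule sum.cong) (auto simp: minus_div_mult_eq_mod[symmetric] mult.commute)
  also have "\<dots> = h * (\<Sum>j\<in>{1..k-1}. j) - k*(\<Sum>j\<in>{1..k-1}. h*j div k)"
    by (simp add: sum_subtractf sum_distrib_left)
  finally show ?thesis by simp
qed

lemma F4:
  fixes h k :: int
  shows "(\<Sum>j\<in>{1..k-1}. j * (h*j mod k)) = h * (\<Sum>j\<in>{1..k-1}. j^2) - k*(\<Sum>j\<in>{1..k-1}. j*(h*j div k))"
proof -
  have "(\<Sum>j\<in>{1..k-1}. j * (h*j mod k)) = (\<Sum>j\<in>{1..k-1}. h*j^2 - k*(j*(h*j div k)))"
    by (rule sum.cong) (auto simp: minus_div_mult_eq_mod[symmetric] algebra_simps power2_eq_square)
  also have "\<dots> = h * (\<Sum>j\<in>{1..k-1}. j^2) - k*(\<Sum>j\<in>{1..k-1}. j*(h*j div k))"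
    by (simp add: sum_subtractf sum_distrib_left)
  finally show ?thesis .
qed

lemma F3:
  fixes h k :: int
  assumes "h \<ge> 1" "k \<ge> 1" "coprime h k"
  shows "(\<Sum>j\<in>{1..k-1}. (h*j div k)^2) + (\<Sum>j\<in>{1..k-1}. h*j div k)
         + 2 * (\<Sum>i\<in>{1..h-1}. i*(k*i div h)) = (k-1)*h*(h-1)"
proof -
  have neq: "k*i \<noteq> h*j" if "i \<in> {1..h-1}" "j \<in> {1..k-1}" for i j
    using ndvd_aux[OF assms(3) that(2)] by (metis dvd_triv_left)
  have qj: "h*j div k \<le> h-1" if "j \<in> {1..k-1}" for j
  proof -
    have "h*j < h*k" using that assms by (simp add: mult_strict_left_mono)
    then have "h*j div k < h" using assms(2) by (smt (verit, ccfv_SIG) div_mod_decomp_int nonzero_mult_div_cancel_right pos_mod_sign zdiv_mono1)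
    then show ?thesis by simp
  qed
  have qi: "k*i div h \<le> k-1" if "i \<in> {1..h-1}" for i
  proof -
    have "k*i < k*h" using that assms by (simp add: mult_strict_left_mono)
    then have "k*i div h < k" using assms(1) by (smt (verit, ccfv_SIG) div_mod_decomp_int nonzero_mult_div_cancel_right pos_mod_sign zdiv_mono1)
    then show ?thesis by simp
  qed
  have inner1: "2 * (\<Sum>i\<in>{1..h-1}. if k*i < h*j then i else 0) = (h*j div k)^2 + (h*j div k)"
    if j: "j \<in> {1..k-1}" for j
  proof -
    have "(\<Sum>i\<in>{1..h-1}. if k*i < h*j then i else 0) = (\<Sum>i\<in>{i\<in>{1..h-1}. k*i < h*j}. i)"
      by (rule sum.inter_filter[symmetric]) simp
    also have "{i\<in>{1..h-1}. k*i < h*j} = {1..h*j div k}"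
    proof -
      have "\<forall>x\<in>{1..h-1}. k*x \<noteq> h*j" using neq[OF _ j] by force
      then show ?thesis using floor_set[of k "h-1" "h*j"] qj[OF j] assms(2) by auto
    qed
    finally have "2 * (\<Sum>i\<in>{1..h-1}. if k*i < h*j then i else 0) = 2 * (\<Sum>i\<in>{1..h*j div k}. i)" by simp
    also have "\<dots> = (h*j div k) * (h*j div k + 1)"
      by (rule sum_id_int) (use j assms in \<open>simp add: pos_imp_zdiv_nonneg_iff\<close>)
    finally show ?thesis by (simp add: power2_eq_square algebra_simps)
  qed
  have inner2: "(\<Sum>j\<in>{1..k-1}. if h*j < k*i then i else 0) = i * (k*i div h)"
    if i: "i \<in> {1..h-1}" for i
  proof -
    have "(\<Sum>j\<in>{1..k-1}. if h*j < k*i then i else 0) = (\<Sum>j\<in>{j\<in>{1..k-1}. h*j < k*i}. i)"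
      by (rule sum.inter_filter[symmetric]) simp
    also have "{j\<in>{1..k-1}. h*j < k*i} = {1..k*i div h}"
    proof -
      have "\<forall>x\<in>{1..k-1}. h*x \<noteq> k*i" using neq[OF i] by force
      then show ?thesis using floor_set[of h "k-1" "k*i"] qi[OF i] assms(1) by auto
    qed
    also have "(\<Sum>j\<in>{1..k*i div h}. i) = i * (k*i div h)"
      using i assms by (simp add: pos_imp_zdiv_nonneg_iff)
    finally show ?thesis .
  qed
  have "(\<Sum>j\<in>{1..k-1}. \<Sum>i\<in>{1..h-1}. i) = (\<Sum>j\<in>{1..k-1}. \<Sum>i\<in>{1..h-1}.
           (if k*i < h*j then i else 0) + (if h*j < k*i then i else 0))"
  proof (intro sum.cong refl)
    fix j i assume "j \<in> {1..k-1}" "i \<in> {1..h-1}"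
    then show "i = (if k*i < h*j then i else 0) + (if h*j < k*i then i else 0)"
      using neq[of i j] by auto
  qed
  also have "\<dots> = (\<Sum>j\<in>{1..k-1}. \<Sum>i\<in>{1..h-1}. if k*i < h*j then i else 0)
      + (\<Sum>i\<in>{1..h-1}. \<Sum>j\<in>{1..k-1}. if h*j < k*i then i else 0)"
    by (simp add: sum.distrib sum.swap[of _ "{1..h-1}"])
  also have "\<dots> = (\<Sum>j\<in>{1..k-1}. \<Sum>i\<in>{1..h-1}. if k*i < h*j then i else 0)
      + (\<Sum>i\<in>{1..h-1}. i * (k*i div h))"
    using inner2 by simp
  finally have eq: "2*(\<Sum>j\<in>{1..k-1}. \<Sum>i\<in>{1..h-1}. i) = (\<Sum>j\<in>{1..k-1}. 2*(\<Sum>i\<in>{1..h-1}. if k*i < h*j then i else 0))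
      + 2*(\<Sum>i\<in>{1..h-1}. i * (k*i div h))"
    by (simp add: sum_distrib_left)
  have "(\<Sum>j\<in>{1..k-1}. 2*(\<Sum>i\<in>{1..h-1}. if k*i < h*j then i else 0)) =
        (\<Sum>j\<in>{1..k-1}. (h*j div k)^2 + (h*j div k))"
    using inner1 by simp
  also have "\<dots> = (\<Sum>j\<in>{1..k-1}. (h*j div k)^2) + (\<Sum>j\<in>{1..k-1}. h*j div k)"
    by (simp add: sum.distrib)
  finally have eq2: "(\<Sum>j\<in>{1..k-1}. 2*(\<Sum>i\<in>{1..h-1}. if k*i < h*j then i else 0)) =
     (\<Sum>j\<in>{1..k-1}. (h*j div k)^2) + (\<Sum>j\<in>{1..k-1}. h*j div k)" .
  have "2*(\<Sum>j\<in>{1..k-1}. \<Sum>i\<in>{1..h-1}. i) = (k-1) * (2*(\<Sum>i\<in>{1..h-1}. i))"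
    using assms by simp
  also have "\<dots> = (k-1)*((h-1)*h)" using sum_id_int[of "h-1"] assms by simp
  finally show ?thesis using eq eq2 by (simp add: algebra_simps)
qed


lemma recip_poly:
  fixes h k X Y Z X' P1 P2 Q1 Q2 :: int
  assumes "h^2*P2 - 2*h*k*X + k^2*Y = P2"
    "h*P1 - k*Z = P1"
    "Y + Z + 2*X' = (k-1)*h*(h-1)"
    "2*P1 = k*(k-1)" "6*P2 = (k-1)*k*(2*k-1)"
    "2*Q1 = h*(h-1)" "6*Q2 = (h-1)*h*(2*h-1)"
  shows "3*h^2*(4*(h*P2 - k*X) - 4*k*P1 + (k-1)*k^2) + 3*k^2*(4*(k*Q2 - h*X') - 4*h*Q1 + (h-1)*h^2)
     = h*k*(h^2+k^2+1) - 3*h^2*k^2"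
proof -
  define e1 where "e1 = h^2*P2 - 2*h*k*X + k^2*Y - P2"
  define e2 where "e2 = Y+Z+2*X'-(k-1)*h*(h-1)"
  define e3 where "e3 = h*P1-k*Z-P1"
  define e4 where "e4 = 2*P1-k*(k-1)"
  define e5 where "e5 = 6*P2-(k-1)*k*(2*k-1)"
  define e6 where "e6 = 2*Q1-h*(h-1)"
  define e7 where "e7 = 6*Q2-(h-1)*h*(2*h-1)"
  have z: "e1 = 0" "e2 = 0" "e3 = 0" "e4 = 0" "e5 = 0" "e6 = 0" "e7 = 0"
    using assms unfolding e1_def e2_def e3_def e4_def e5_def e6_def e7_def by simp_all
  have "3*h^2*(4*(h*P2 - k*X) - 4*k*P1 + (k-1)*k^2) + 3*k^2*(4*(k*Q2 - h*X') - 4*h*Q1 + (h-1)*h^2)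
     - (h*k*(h^2+k^2+1) - 3*h^2*k^2) = 6*h*e1-6*k*k*h*e2-6*h*k*e3-3*h*k*(h+1)*e4+h*(h*h+1)*e5-6*h*k*k*e6+2*k^3*e7"
    unfolding e1_def e2_def e3_def e4_def e5_def e6_def e7_def by algebra
  then show ?thesis using z by simp
qed


lemma saw_div:
  fixes a k :: int
  assumes "k > 0" "\<not> k dvd a"
  shows "sawtooth (of_int a / of_int k) = of_int (a mod k) / of_int k - 1/2"
proof -
  have ni: "of_int a / of_int k \<notin> (\<int>::real set)"
  proof
    assume "of_int a / of_int k \<in> (\<int>::real set)"
    then obtain z where "of_int a / of_int k = (of_int z::real)" by (auto elim: Ints_cases)
    then have "of_int a = (of_int (k*z)::real)" using assms(1) by (simp add: field_simps)
    then have "a = k*z" by linarith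
    then show False using assms(2) by simp
  qed
  have fl: "\<lfloor>of_int a / (of_int k::real)\<rfloor> = a div k" by (rule floor_divide_of_int_eq)
  have "of_int a / (of_int k::real) - of_int (a div k) = of_int (a mod k) / of_int k"
  proof -
    have "a = k * (a div k) + a mod k" by simp
    then have "(of_int a::real) = of_int k * of_int (a div k) + of_int (a mod k)" by (metis of_int_add of_int_mult)
    then show ?thesis using assms(1) by (simp add: field_simps)
  qed
  then show ?thesis unfolding sawtooth_def using ni fl by simp
qed

lemma D_formula:
  fixes h k :: int
  assumes "k \<ge> 1" "coprime h k"
  shows "4*(of_int k)^2 * dedekind_sum h k =
    of_int (4*(\<Sum>j\<in>{1..k-1}. j*(h*j mod k)) - 4*k*(\<Sum>j\<in>{1..k-1}. j) + (k-1)*k^2)"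
proof -
  have set: "{1..k} = insert k {1..k-1}" using assms by auto
  have zero: "sawtooth 1 = 0" by (simp add: sawtooth_def)
  have "dedekind_sum h k = (\<Sum>j\<in>{1..k-1}. sawtooth (of_int j / of_int k) * sawtooth (of_int (h * j) / of_int k))"
    unfolding dedekind_sum_def using assms by (simp add: set zero)
  then have "4*(of_int k)^2 * dedekind_sum h k = (\<Sum>j\<in>{1..k-1}. 4*(of_int k)^2 * (sawtooth (of_int j / of_int k) * sawtooth (of_int (h * j) / of_int k)))"
    by (simp add: sum_distrib_left)
  also have "\<dots> = (\<Sum>j\<in>{1..k-1}. of_int ((2*j - k)*(2*(h*j mod k) - k)))"
  proof (rule sum.cong[OF refl])
    fix j assume j: "j \<in> {1..k-1}"
    have nd1: "\<not> k dvd j" using j by (auto dest: zdvd_imp_le)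
    have nd2: "\<not> k dvd h*j"
    proof
      assume "k dvd h*j"
      then have "k dvd j" using assms(2) by (simp add: coprime_commute coprime_dvd_mult_right_iff)
      then show False using nd1 by simp
    qed
    have jm: "j mod k = j" using j by simp
    have s1: "sawtooth (of_int j / of_int k) = (2*of_int j - of_int k)/(2*of_int k)"
      using saw_div[OF _ nd1] jm assms by (simp add: field_simps)
    have s2: "sawtooth (of_int (h*j) / of_int k) = (2*of_int (h*j mod k) - of_int k)/(2*of_int k)"
      using saw_div[OF _ nd2] assms by (simp add: field_simps)
    show "4*(of_int k)^2 * (sawtooth (of_int j / of_int k) * sawtooth (of_int (h * j) / of_int k)) =
          (of_int ((2*j - k)*(2*(h*j mod k) - k)) :: real)"
      unfolding s1 s2 using assms by (simp add: field_simps power2_eq_square)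
  qed
  also have "\<dots> = of_int (\<Sum>j\<in>{1..k-1}. (2*j - k)*(2*(h*j mod k) - k))" by simp
  also have "(\<Sum>j\<in>{1..k-1}. (2*j - k)*(2*(h*j mod k) - k)) =
      (\<Sum>j\<in>{1..k-1}. 4*(j*(h*j mod k)) - 2*k*j - 2*k*(h*j mod k) + k^2)"
    by (rule sum.cong) (auto simp: algebra_simps power2_eq_square)
  also have "\<dots> = 4*(\<Sum>j\<in>{1..k-1}. j*(h*j mod k)) - 2*k*(\<Sum>j\<in>{1..k-1}. j) - 2*k*(\<Sum>j\<in>{1..k-1}. h*j mod k) + (k-1)*k^2"
    using assms by (simp add: sum.distrib sum_subtractf sum_distrib_left)
  also have "(\<Sum>j\<in>{1..k-1}. h*j mod k) = (\<Sum>j\<in>{1..k-1}. j)"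
    using perm_sums[OF assms] by simp
  finally show ?thesis by (simp add: algebra_simps)
qed

lemma reciprocity:
  fixes h k :: int
  assumes "h \<ge> 1" "k \<ge> 1" "coprime h k"
  shows "S h k + S k h = of_int h / of_int k + of_int k / of_int h + 1 / (of_int h * of_int k) - 3"
proof -
  have ck: "coprime k h" using assms(3) by (simp add: coprime_commute)
  define I1 where "I1 = 4*(\<Sum>j\<in>{1..k-1}. j*(h*j mod k)) - 4*k*(\<Sum>j\<in>{1..k-1}. j) + (k-1)*k^2"
  define I2 where "I2 = 4*(\<Sum>j\<in>{1..h-1}. j*(k*j mod h)) - 4*h*(\<Sum>j\<in>{1..h-1}. j) + (h-1)*h^2"
  have d1: "4*(of_int k)^2 * dedekind_sum h k = of_int I1" unfolding I1_def by (rule D_formula[OF assms(2,3)])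
  have d2: "4*(of_int h)^2 * dedekind_sum k h = of_int I2" unfolding I2_def by (rule D_formula[OF assms(1) ck])
  have key: "3*h^2*I1 + 3*k^2*I2 = h*k*(h^2+k^2+1) - 3*h^2*k^2"
    unfolding I1_def I2_def F4
  proof (rule recip_poly)
    show "h\<^sup>2 * (\<Sum>j = 1..k - 1. j\<^sup>2) - 2 * h * k * (\<Sum>j = 1..k - 1. j * (h * j div k)) + k\<^sup>2 * (\<Sum>j = 1..k - 1. (h * j div k)\<^sup>2) = (\<Sum>j = 1..k - 1. j\<^sup>2)"
      by (rule F1[OF assms(2,3)])
    show "h * sum (\<lambda>x. x) {1..k - 1} - k * (\<Sum>j = 1..k - 1. h * j div k) = sum (\<lambda>x. x) {1..k - 1}"
      using F2[OF assms(2,3)] by simp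
    show "(\<Sum>j = 1..k - 1. (h * j div k)\<^sup>2) + (\<Sum>j = 1..k - 1. h * j div k) + 2 * (\<Sum>i = 1..h - 1. i * (k * i div h)) = (k - 1) * h * (h - 1)"
      by (rule F3[OF assms])
    show "2 * sum (\<lambda>x. x) {1..k - 1} = k * (k - 1)" using sum_id_int[of "k-1"] assms by simp
    show "6 * (\<Sum>j = 1..k - 1. j\<^sup>2) = (k - 1) * k * (2 * k - 1)" using sum_sq_int[of "k-1"] assms by (simp add: algebra_simps)
    show "2 * sum (\<lambda>x. x) {1..h - 1} = h * (h - 1)" using sum_id_int[of "h-1"] assms by simp
    show "6 * (\<Sum>j = 1..h - 1. j\<^sup>2) = (h - 1) * h * (2 * h - 1)" using sum_sq_int[of "h-1"] assms by (simp add: algebra_simps)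
  qed
  have keyr: "3*(of_int h)^2*(of_int I1::real) + 3*(of_int k)^2*of_int I2 = of_int h*of_int k*((of_int h)^2+(of_int k)^2+1) - 3*(of_int h)^2*(of_int k)^2"
    using arg_cong[OF key, of "of_int :: int \<Rightarrow> real"] by simp
  have hk: "(of_int h::real) > 0" "(of_int k::real) > 0" using assms by auto
  have "S h k + S k h = 12 * dedekind_sum h k + 12 * dedekind_sum k h" unfolding S_def by simp
  also have "\<dots> = 3 * of_int I1 / (of_int k)^2 + 3 * of_int I2 / (of_int h)^2"
  proof -
    have D1: "dedekind_sum h k = of_int I1/(4*(of_int k)^2)" using d1 hk by (simp add: field_simps)
    have D2: "dedekind_sum k h = of_int I2/(4*(of_int h)^2)" using d2 hk by (simp add: field_simps)
    show ?thesis unfolding D1 D2 by simp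
  qed
  also have "\<dots> = (3*(of_int h)^2*(of_int I1::real) + 3*(of_int k)^2*of_int I2) / ((of_int h)^2 * (of_int k)^2)"
    using hk by (simp add: field_simps)
  also have "\<dots> = of_int h / of_int k + of_int k / of_int h + 1 / (of_int h * of_int k) - 3"
    unfolding keyr using hk by (simp add: field_simps power2_eq_square)
  finally show ?thesis .
qed



lemma ineq1:
  fixes x r n :: real
  assumes "x \<ge> 1" "r \<ge> 1" "(x+1)*r \<le> n" "(x+1)^2 \<le> n"
  shows "x - 1 + 4 * sqrt r \<le> 4 * sqrt n"
proof -
  define u where "u = sqrt (x+1)"
  define s where "s = sqrt n"
  define t where "t = sqrt r"
  have u1: "u \<ge> 1" using assms(1) unfolding u_def by simp
  have uu: "u^2 = x + 1" using assms(1) unfolding u_def by simp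
  have tu: "t * u \<le> s" unfolding t_def u_def s_def using assms
    by (metis mult.commute real_sqrt_le_mono real_sqrt_mult)
  have su: "u^2 \<le> s"
  proof -
    have "sqrt ((x+1)^2) \<le> sqrt n" by (rule real_sqrt_le_mono[OF assms(4)])
    moreover have "sqrt((x+1)^2) = x+1" using assms(1) by simp
    ultimately show ?thesis unfolding s_def using uu by simp
  qed
  have a: "u^3 - 2*u \<le> 4*s*(u-1)"
  proof -
    have "4*u^2*(u-1) \<le> 4*s*(u-1)" using su u1 by (intro mult_right_mono) auto
    moreover have "u^3 - 2*u \<le> 4*u^2*(u-1)"
    proof -
      have "0 \<le> 3*(u - 2/3)^2 + 2/3" by simp
      also have "3*(u - 2/3)^2 + 2/3 = 3*u^2 - 4*u + 2" by (simp add: power2_eq_square algebra_simps)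
      finally have "0 \<le> u*(3*u^2 - 4*u + 2)" using u1 by simp
      then show ?thesis by (simp add: power3_eq_cube power2_eq_square algebra_simps)
    qed
    ultimately show ?thesis by linarith
  qed
  have "u * (4*t) \<le> u * (4*s - u^2 + 2)"
    using tu a by (simp add: algebra_simps power3_eq_cube power2_eq_square)
  then have "4*t \<le> 4*s - u^2 + 2" using u1 by (simp add: mult_le_cancel_left)
  then show ?thesis unfolding t_def s_def using uu by simp
qed


lemma ineq2:
  fixes x r n :: real
  assumes "x \<ge> 1" "r \<ge> 1" "(x+1)*r \<le> n" "\<not> (x+1)^2 \<le> n"
  shows "r - 1 + 4 * sqrt r \<le> 4 * sqrt n"
proof -
  have "(x+1)*r < (x+1)*(x+1)" using assms(3,4) by (simp add: power2_eq_square)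
  then have rx: "r < x+1" using assms(1) by (simp add: mult_less_cancel_left)
  have "r*r < (x+1)*r" using rx assms(2) by (simp add: mult_strict_right_mono)
  then have "r^2 < n" using assms(3) by (simp add: power2_eq_square)
  then have "sqrt (r^2) < sqrt n" by (rule real_sqrt_less_mono)
  then have rs: "r < sqrt n" using assms(2) by simp
  define t where "t = sqrt r"
  have t1: "t \<ge> 1" using assms(2) unfolding t_def by simp
  have tt: "t^2 = r" using assms(2) unfolding t_def by simp
  have "0 \<le> (3*t - 1)*(t - 1)" using t1 by simp
  then have "t^2 - 1 + 4*t \<le> 4*t^2" by (simp add: power2_eq_square algebra_simps)
  then show ?thesis using rs tt unfolding t_def[symmetric] by linarith
qed

lemma ineq:
  fixes x r n B :: real
  assumes "x \<ge> 1" "r \<ge> 1" "(x+1)*r \<le> n" "x \<le> B"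
  shows "x - 1 + min B r + 4 * sqrt r \<le> min B n + 4 * sqrt n"
proof (cases "(x+1)^2 \<le> n")
  case True
  have "r * 1 \<le> r * (x+1)" using assms(1,2) by (intro mult_left_mono) auto
  then have "r \<le> n" using assms(3) by (simp add: mult.commute)
  then have "min B r \<le> min B n" by (auto simp: min_def)
  then show ?thesis using ineq1[OF assms(1-3) True] by linarith
next
  case False
  have "x \<le> n" using assms by (smt (verit) mult_le_cancel_left1)
  then have "x \<le> min B n" using assms(4) by simp
  moreover have "min B r \<le> r" by simp
  ultimately show ?thesis using ineq2[OF assms(1-3) False] by linarith
qed


lemma S_01: "S 0 1 = 0"
  by (simp add: S_def dedekind_sum_def sawtooth_def)

lemma S_1n:
  assumes "n \<ge> 1"
  shows "S 1 n = of_int n + 2 / of_int n - 3"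
proof -
  have "S n 1 = S (n mod 1) 1" by (rule S_mod) simp
  then have "S n 1 = 0" using S_01 by simp
  moreover have "S 1 n + S n 1 = of_int 1 / of_int n + of_int n / of_int 1 + 1 / (of_int 1 * of_int n) - 3"
    by (rule reciprocity) (use assms in auto)
  ultimately show ?thesis by simp
qed

lemma main_bound:
  fixes n m :: int and B :: real
  assumes "n \<ge> 1" "0 \<le> m" "m < n" "coprime m n" "B \<ge> 1"
    "\<forall>d q. 1 \<le> d \<longrightarrow> 1 \<le> q \<longrightarrow> q \<le> n \<longrightarrow> (d*m) mod n = q mod n \<longrightarrow> of_int n \<le> B * of_int d * of_int q"
  shows "S m n - of_int m / of_int n \<le> min B (of_int n) + 4 * sqrt (of_int n)"
  using assms
proof (induction "nat n" arbitrary: n m rule: less_induct)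
  case less
  note H = less.prems(6)
  have n1: "n \<ge> 1" and m0: "0 \<le> m" and mn: "m < n" and cop: "coprime m n" and B1: "B \<ge> 1"
    using less.prems by auto
  consider "m = 0" | "m = 1" | "m \<ge> 2" using m0 by linarith
  then show ?case
  proof cases
    case 1
    then have "n = 1" using cop n1 by simp
    then show ?thesis using 1 B1 S_01 by simp
  next
    case 2
    have nB: "of_int n \<le> B" using H[rule_format, of 1 1] n1 2 by simp
    have "S m n - of_int m / of_int n = of_int n + 1 / of_int n - 3"
      using S_1n[OF n1] 2 by simp
    also have "\<dots> \<le> of_int n - 2" using n1 by (simp add: divide_le_eq)
    also have "\<dots> \<le> min B (of_int n)" using nB by simp
    finally have "S m n - of_int m / of_int n \<le> min B (of_int n)" .
    moreover have "0 \<le> sqrt (of_int n)" using n1 by simp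
    ultimately show ?thesis by linarith
  next
    case 3
    define a where "a = n div m"
    define r where "r = n mod m"
    have na: "n = a*m + r" unfolding a_def r_def by simp
    have r0: "0 \<le> r" "r < m" unfolding r_def using 3 by auto
    have rne0: "r \<noteq> 0"
    proof
      assume "r = 0"
      then have "m dvd n" unfolding r_def by auto
      then have "m dvd 1" using cop by (metis coprime_common_divisor dvd_refl)
      then show False using 3 by (auto dest: zdvd_imp_le)
    qed
    have r1: "r \<ge> 1" using r0 rne0 by simp
    have a1: "a \<ge> 1"
    proof -
      have "m div m \<le> n div m" using mn 3 by (intro zdiv_mono1) auto
      then show ?thesis using 3 unfolding a_def by simp
    qed
    have mB: "of_int n \<le> B * of_int m"
      using H[rule_format, of 1 m] 3 mn by simp
    have mpos: "(of_int m::real) > 0" using 3 by simp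
    have npos: "(of_int n::real) > 0" using n1 by simp
    have aB: "of_int a \<le> B"
    proof -
      have "of_int a * of_int m \<le> (of_int n::real)" using na r0 by (simp flip: of_int_mult of_int_add)
      also have "\<dots> \<le> B * of_int m" by (rule mB)
      finally show ?thesis using mpos by (simp add: mult_le_cancel_right)
    qed
    have rec1: "S m n + S n m = of_int m / of_int n + of_int n / of_int m + 1 / (of_int m * of_int n) - 3"
      by (rule reciprocity) (use 3 n1 cop in auto)
    have Snm: "S n m = S r m" unfolding r_def by (rule S_mod) (use 3 in simp)
    have copr: "coprime r m" unfolding r_def using cop
      by (metis coprime_commute coprime_mod_left_iff less_le_not_le order.strict_trans1 r0(1) r_def rne0 3 zero_less_numeral)
    show ?thesis
    proof (cases "r = 1")
      case True
      have "S r m = of_int m + 2 / of_int m - 3" using S_1n[of m] True 3 by simp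
      then have "S m n - of_int m / of_int n = of_int n / of_int m + 1 / (of_int m * of_int n) - of_int m - 2 / of_int m"
        using rec1 Snm by simp
      also have "\<dots> \<le> of_int n / of_int m - 1"
      proof -
        have "(1::int)*1 \<le> m*n" using 3 n1 by (intro mult_mono) auto
        then have "(1::real) \<le> of_int m * of_int n" by (simp flip: of_int_mult)
        then have "1 / (of_int m * of_int n) \<le> (1::real)" by (simp add: divide_le_eq)
        moreover have "0 \<le> 2 / (of_int m::real)" using 3 by simp
        moreover have "(2::real) \<le> of_int m" using 3 by simp
        ultimately show ?thesis by linarith
      qed
      also have "\<dots> \<le> min B (of_int n)"
      proof -
        have "of_int n / of_int m \<le> B" using mB mpos by (simp add: divide_le_eq mult.commute)
        moreover have "of_int n / of_int m \<le> (of_int n::real)" using mpos npos 3 by (simp add: divide_le_eq)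
        ultimately show ?thesis by simp
      qed
      finally have "S m n - of_int m / of_int n \<le> min B (of_int n)" by simp
      moreover have "0 \<le> sqrt (of_int n)" using n1 by simp
      ultimately show ?thesis by linarith
    next
      case False
      then have r2: "r \<ge> 2" using r1 by simp
      define r' where "r' = m mod r"
      have r'0: "0 \<le> r'" "r' < r" unfolding r'_def using r1 by auto
      have copr': "coprime r' r" unfolding r'_def using copr
        by (metis coprime_commute coprime_mod_left_iff less_le_not_le r1 zero_less_one order.strict_trans1)
      have rec2: "S r m + S m r = of_int r / of_int m + of_int m / of_int r + 1 / (of_int r * of_int m) - 3"
        by (rule reciprocity) (use r1 3 copr in auto)
      have Smr: "S m r = S r' r" unfolding r'_def by (rule S_mod) (use r1 in simp)
      have H': "\<forall>d q. 1 \<le> d \<longrightarrow> 1 \<le> q \<longrightarrow> q \<le> r \<longrightarrow> (d*r') mod r = q mod r \<longrightarrow> of_int r \<le> B * of_int d * of_int q"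
      proof (intro allI impI)
        fix d' q' :: int
        assume d'1: "1 \<le> d'" and q'1: "1 \<le> q'" and q'r: "q' \<le> r" and cg: "(d'*r') mod r = q' mod r"
        have "(d'*m) mod r = (d'*r') mod r" unfolding r'_def by (simp add: mod_mult_right_eq)
        then have "(d'*m) mod r = q' mod r" using cg by simp
        then have "r dvd (d'*m - q')" by (simp add: mod_eq_dvd_iff)
        then obtain t where t: "d'*m - q' = r*t" by (auto elim: dvdE)
        have "d'*m \<ge> 1*m" using d'1 3 by (intro mult_right_mono) auto
        then have "r*t > 0" using t q'r r0 by linarith
        then have t1: "t \<ge> 1" using r1 by (simp add: zero_less_mult_iff)
        define d where "d = d' + t*a"
        have dm: "d*m = q' + n*t" unfolding d_def using t na by (simp add: algebra_simps)
        have dmod: "(d*m) mod n = q' mod n" unfolding dm by simp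
        have d1: "1 \<le> d" unfolding d_def using d'1 t1 a1 by (smt (verit) mult_nonneg_nonneg)
        have q'n: "q' \<le> n" using q'r r0 mn by linarith
        have Hn: "of_int n \<le> B * of_int d * of_int q'" using H d1 q'1 q'n dmod by blast
        have dr: "d*r = d'*n - a*q'" unfolding d_def using t na by (simp add: algebra_simps)
        have dr2: "d*r \<le> d'*n" using dr a1 q'1 by (smt (verit) mult_nonneg_nonneg)
        have "of_int n * of_int r \<le> B * of_int d * of_int q' * (of_int r::real)"
          using Hn r1 by (intro mult_right_mono) auto
        also have "\<dots> = (B * of_int q') * of_int (d*r)" by simp
        also have "\<dots> \<le> (B * of_int q') * of_int (d'*n)"
        proof (rule mult_left_mono)
          show "of_int (d*r) \<le> (of_int (d'*n)::real)" using dr2 by linarith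
          show "0 \<le> B * of_int q'" using B1 q'1 by simp
        qed
        also have "\<dots> = of_int n * (B * of_int d' * of_int q')" by simp
        finally show "of_int r \<le> B * of_int d' * of_int q'" using npos by (simp add: mult_le_cancel_left)
      qed
      have IH: "S r' r - of_int r' / of_int r \<le> min B (of_int r) + 4 * sqrt (of_int r)"
        using less.hyps[of r r'] r1 r'0 copr' B1 H' r0 mn by auto
      have "S m n - of_int m / of_int n = of_int n / of_int m - of_int r / of_int m - of_int m / of_int r
          + 1 / (of_int m * of_int n) - 1 / (of_int r * of_int m) + S r' r"
        using rec1 rec2 Snm Smr by (simp add: algebra_simps)
      also have "\<dots> \<le> (of_int a - 1) + (S r' r - of_int r' / of_int r)"
      proof -
        have rpos: "(of_int r::real) > 0" using r1 by simp
        have e1: "of_int n / of_int m - of_int r / of_int m = (of_int a::real)"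
          using na mpos by (simp add: field_simps)
        have "m = (m div r) * r + r'" unfolding r'_def by simp
        moreover have mr1: "m div r \<ge> 1"
        proof -
          have "r div r \<le> m div r" using r0 r1 by (intro zdiv_mono1) auto
          then show ?thesis using r1 by simp
        qed
        moreover have "1 * r \<le> (m div r) * r" using mr1 r1 by (intro mult_right_mono) auto
        ultimately have "m \<ge> r + r'" by linarith
        then have "(of_int r + of_int r')/of_int r \<le> of_int m / (of_int r::real)"
          using rpos by (intro divide_right_mono) auto
        moreover have "(of_int r + of_int r')/of_int r = 1 + of_int r' / (of_int r::real)"
          using rpos by (simp add: field_simps)
        ultimately have e2: "of_int m / of_int r \<ge> 1 + of_int r' / (of_int r::real)" by simp
        have e3: "1 / (of_int m * of_int n) \<le> 1 / (of_int r * (of_int m::real))"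
        proof (rule divide_left_mono)
          have "(of_int r::real) \<le> of_int n" using r0 mn by simp
          then have "of_int r * of_int m \<le> of_int n * (of_int m::real)"
            using mpos by (intro mult_right_mono) auto
          then show "of_int r * of_int m \<le> of_int m * (of_int n::real)" by (simp only: mult.commute)
          show "(0::real) \<le> 1" by simp
          show "0 < of_int m * of_int n * (of_int r * (of_int m::real))" using mpos npos rpos by simp
        qed
        show ?thesis using e1 e2 e3 by linarith
      qed
      also have "\<dots> \<le> (of_int a - 1) + (min B (of_int r) + 4 * sqrt (of_int r))"
        using IH by simp
      also have "\<dots> \<le> min B (of_int n) + 4 * sqrt (of_int n)"
      proof -
        have "(of_int a + 1) * of_int r \<le> (of_int n::real)"
        proof -
          have "a*r \<le> a*m" using r0 a1 by (intro mult_left_mono) auto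
          then have "(a+1)*r \<le> n" using na by (simp add: algebra_simps)
          then have "(of_int ((a+1)*r)::real) \<le> of_int n" by (simp only: of_int_le_iff)
          then show ?thesis by simp
        qed
        moreover have "(1::real) \<le> of_int a" "(1::real) \<le> of_int r" using a1 r1 by simp_all
        ultimately show ?thesis using ineq[of "of_int a" "of_int r" "of_int n" B] aB by linarith
      qed
      finally show ?thesis .
    qed
  qed
qed


lemma Skn_lower:
  fixes k n :: int
  assumes "k \<ge> 1" "n \<ge> 1" "coprime k n"
  shows "S k n \<ge> of_int n / of_int k - 3 - 3 * of_int k"
proof -
  have rec: "S k n + S n k = of_int k / of_int n + of_int n / of_int k + 1 / (of_int k * of_int n) - 3"
    by (rule reciprocity) (use assms in auto)
  have "\<bar>S n k\<bar> \<le> 3 * k" by (rule S_bound) (use assms in simp)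
  moreover have "0 \<le> of_int k / (of_int n::real)" "0 \<le> 1 / (of_int k * (of_int n::real))" using assms by simp_all
  ultimately show ?thesis using rec by linarith
qed

lemma represent:
  fixes k n m d q :: int
  assumes "k \<ge> 1" "n > k" "0 \<le> m" "m < n" "1 \<le> d" "1 \<le> q" "d*q \<le> k" "(d*m) mod n = q mod n"
  shows "\<exists>d c q::int. d \<in> {1..k} \<and> c \<in> {0..d-1} \<and> gcd c d = 1 \<and>
              q \<in> {1..k div d} \<and> of_int m = (of_int (n * c + q) / of_int d :: real)"
proof -
  have qd: "q \<le> d*q" using assms(5,6) by (simp add: mult_le_cancel_right1)
  then have qn: "q < n" using assms by linarith
  then have "q mod n = q" using assms(6) by simp
  then have "n dvd (d*m - q)" using assms(8) by (metis mod_eq_dvd_iff)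
  then obtain c where c: "d*m - q = n*c" by (auto elim: dvdE)
  have c0: "c \<ge> 0"
  proof -
    have "d*m \<ge> 0" using assms by simp
    then have "n*c > n*(-1)" using c qn by simp
    moreover have "n > 0" using assms(1,2) by simp
    ultimately have "-1 < c" using mult_less_cancel_left_pos[of n "-1" c] by simp
    then show ?thesis by simp
  qed
  have cd: "c < d"
  proof -
    have "d*m \<le> d*(n-1)" using assms by (intro mult_left_mono) auto
    moreover have "d*(n-1) = n*d - d" by (simp add: algebra_simps)
    ultimately have "n*c < n*d" using c assms(5,6) by linarith
    moreover have "n > 0" using assms(1,2) by simp
    ultimately show ?thesis using mult_less_cancel_left_pos[of n c d] by simp
  qed
  define g where "g = gcd c d"
  have g0: "g > 0" unfolding g_def using assms(5) by simp
  define c' where "c' = c div g"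
  define d' where "d' = d div g"
  have cc: "c = g*c'" unfolding c'_def g_def by simp
  have dd: "d = g*d'" unfolding d'_def g_def by simp
  have cop: "gcd c' d' = 1" unfolding c'_def d'_def g_def
    using div_gcd_coprime[of c d] assms(5) by (simp add: coprime_iff_gcd_eq_1)
  have "0 < g*d'" using dd assms(5) by simp
  then have "0 < d'" using g0 zero_less_mult_pos by blast
  then have d'1: "d' \<ge> 1" by simp
  have gdvq: "q = g * (d'*m - n*c')" using c cc dd by (simp add: algebra_simps)
  define q' where "q' = d'*m - n*c'"
  have qq: "q = g*q'" using gdvq q'_def by simp
  have "0 < g*q'" using qq assms(6) by simp
  then have "0 < q'" using g0 zero_less_mult_pos by blast
  then have q'1: "q' \<ge> 1" by simp
  have c'0: "c' \<ge> 0" using cc g0 c0 by (simp add: zero_le_mult_iff)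
  have c'd: "c' < d'" using cc dd g0 cd mult_less_cancel_left_pos[of g c' d'] by simp
  have "d'*q' \<le> d*q"
  proof -
    have "1*1 \<le> g*g" using g0 by (intro mult_mono) auto
    then have "d'*q' * 1 \<le> d'*q' * (g*g)" using d'1 q'1 by (intro mult_left_mono) auto
    then show ?thesis using dd qq by (simp add: algebra_simps)
  qed
  then have dq': "d'*q' \<le> k" using assms(7) by linarith
  have "d'*1 \<le> d'*q'" using q'1 d'1 by (intro mult_left_mono) auto
  then have d'k: "d' \<le> k" using dq' by simp
  have q'k: "q' \<le> k div d'"
  proof -
    have "(d'*q') div d' \<le> k div d'" using dq' d'1 by (intro zdiv_mono1) auto
    then show ?thesis using d'1 by simp
  qed
  have eq: "d'*m = n*c' + q'" unfolding q'_def by simp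
  have "of_int m = (of_int (n * c' + q') / of_int d' :: real)"
  proof -
    have "(of_int (d'*m)::real) = of_int (n*c' + q')" using eq by simp
    then show ?thesis using d'1 by (simp add: field_simps)
  qed
  moreover have "gcd c' d' = 1" by (rule cop)
  ultimately show ?thesis using d'1 d'k c'0 c'd q'1 q'k by (intro exI[of _ d'] exI[of _ c'] exI[of _ q']) auto
qed


lemma numeric:
  fixes k n :: real
  assumes "k \<ge> 1" "n \<ge> (8*(k*(k+1)) + 4 + 3*k)^2"
  shows "1 + n/(k+1) + 4 * sqrt n < n/k - 3 - 3*k"
proof -
  define K where "K = k*(k+1)"
  have K0: "K > 0" unfolding K_def using assms(1) by simp
  define s where "s = sqrt n"
  have "sqrt ((8*K + 4 + 3*k)^2) \<le> s" unfolding s_def K_def by (rule real_sqrt_le_mono[OF assms(2)])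
  moreover have "sqrt ((8*K + 4 + 3*k)^2) = 8*K + 4 + 3*k" using K0 assms(1) by simp
  ultimately have sge: "s \<ge> 8*K + 4 + 3*k" by simp
  have n0: "n \<ge> 0" using assms(2) by (smt (verit) zero_le_power2)
  have ss: "n = s*s" unfolding s_def using n0 by simp
  have "8*K*s \<le> s*s" using sge K0 assms(1) by (intro mult_right_mono) auto
  then have "8*s \<le> n/K" using K0 ss by (simp add: field_simps)
  moreover have "n/k - n/(k+1) = n/K" unfolding K_def using assms(1) by (simp add: field_simps)
  moreover have "4*s \<ge> 4*(4 + 3*k)" using sge K0 by simp
  ultimately have "n/k - n/(k+1) \<ge> 4*s + 16 + 12*k" by argo
  then show ?thesis using assms(1) unfolding s_def by linarith
qed

theorem theorem1:
  fixes k :: int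
  assumes "k > 0"
  shows "\<exists>N::int. \<forall>n m::int.
           n > max k N \<longrightarrow> gcd k n = 1 \<longrightarrow> m \<in> {0..n-1} \<longrightarrow> gcd m n = 1 \<longrightarrow>
           S m n \<ge> S k n \<longrightarrow>
           (\<exists>d c q::int. d \<in> {1..k} \<and> c \<in> {0..d-1} \<and> gcd c d = 1 \<and>
              q \<in> {1..k div d} \<and> of_int m = (of_int (n * c + q) / of_int d :: real))"
proof -
  define N where "N = (8*(k*(k+1)) + 4 + 3*k)^2"
  show ?thesis
  proof (rule exI[of _ N], intro allI impI)
    fix n m :: int
    assume nN: "n > max k N" and gk: "gcd k n = 1" and mr: "m \<in> {0..n-1}" and gm: "gcd m n = 1"
      and SS: "S m n \<ge> S k n"
    show "\<exists>d c q::int. d \<in> {1..k} \<and> c \<in> {0..d-1} \<and> gcd c d = 1 \<and>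
              q \<in> {1..k div d} \<and> of_int m = (of_int (n * c + q) / of_int d :: real)"
    proof (rule ccontr)
      assume nrep: "\<not> (\<exists>d c q::int. d \<in> {1..k} \<and> c \<in> {0..d-1} \<and> gcd c d = 1 \<and>
              q \<in> {1..k div d} \<and> of_int m = (of_int (n * c + q) / of_int d :: real))"
      have k1: "k \<ge> 1" using assms by simp
      have nk: "n > k" using nN by simp
      have n1: "n \<ge> 1" using nk k1 by simp
      have m0: "0 \<le> m" "m < n" using mr by auto
      define B where "B = (of_int n / of_int (k+1) :: real)"
      have kpos: "(of_int (k+1)::real) > 0" using k1 by simp
      have B1: "B \<ge> 1" unfolding B_def using nk kpos by (simp add: le_divide_eq)
      have H: "\<forall>d q. 1 \<le> d \<longrightarrow> 1 \<le> q \<longrightarrow> q \<le> n \<longrightarrow> (d*m) mod n = q mod n \<longrightarrow> of_int n \<le> B * of_int d * of_int q"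
      proof (intro allI impI)
        fix d q :: int
        assume d1: "1 \<le> d" and q1: "1 \<le> q" and qn: "q \<le> n" and cg: "(d*m) mod n = q mod n"
        have "\<not> d*q \<le> k"
        proof
          assume "d*q \<le> k"
          from represent[OF k1 nk m0 d1 q1 this cg] nrep show False by blast
        qed
        then have "d*q \<ge> k+1" by simp
        then have "(of_int (k+1)::real) \<le> of_int d * of_int q" by (simp flip: of_int_mult)
        then have "of_int n * of_int (k+1) \<le> of_int n * (of_int d * (of_int q::real))"
          using n1 by (intro mult_left_mono) auto
        then show "of_int n \<le> B * of_int d * of_int q" unfolding B_def using kpos
          by (simp add: field_simps)
      qed
      have up: "S m n - of_int m / of_int n \<le> min B (of_int n) + 4 * sqrt (of_int n)"
        by (rule main_bound[OF n1 m0 _ B1 H]) (use gm in \<open>simp add: coprime_iff_gcd_eq_1\<close>)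
      have "of_int m / of_int n \<le> (1::real)" using m0 n1 by (simp add: divide_le_eq)
      then have up2: "S m n \<le> 1 + B + 4 * sqrt (of_int n)" using up by linarith
      have low: "S k n \<ge> of_int n / of_int k - 3 - 3 * of_int k"
        by (rule Skn_lower[OF k1 n1]) (use gk in \<open>simp add: coprime_iff_gcd_eq_1\<close>)
      have "N \<le> n" using nN by simp
      then have "(of_int N::real) \<le> of_int n" by simp
      then have nb: "(8*(of_int k*(of_int k+1)) + 4 + 3*of_int k)^2 \<le> (of_int n::real)"
        unfolding N_def by simp
      have "1 + of_int n/(of_int k+1) + 4 * sqrt (of_int n) < of_int n/of_int k - 3 - 3*(of_int k::real)"
        by (rule numeric) (use k1 nb in auto)
      then show False using up2 low SS unfolding B_def by simp
    qed
  qed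
qed


end
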